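(* Let $R:\widehat{\mathbb C}\to\widehat{\mathbb C}$ be a rational function of degree at least $2$ whose Julia set $J(R)$ is connected. If $A\subset J(R)$ is non-empty and $T$-closed in $J(R)$, then $R^{-1}(A)$ (which is contained in $J(R)$) is also $T$-closed in $J(R)$.
   Context: $\widehat{\mathbb C}$ is the Riemann sphere; the Julia set $J(R)$ is the complement of the Fatou set (the domain of normality of the iterates of $R$); it is compact, non-empty, and completely invariant. For a continuum $X$ and a non-empty set $A\subset X$, $T(A)$ is the set of $x\in X$ such that every subcontinuum of $X\setminus A$ containing $x$ has empty interior relative to $X$; $A$ is $T$-closed if $T(A)=A$. Here $X=J(R)$. *)

theory Defs
  imports "HOL-Analysis.Analysis" "HOL-Computational_Algebra.Polynomial"
begin

text \<open>The Riemann sphere is modelled as the unit sphere in complex x real (= R^3),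
  with the Euclidean (chordal) metric; infinity is the north pole (0,1).
  Points of the extended plane are represented as complex option (None = infinity).\<close>

definition riemann_sphere :: "(complex \<times> real) set" where
  "riemann_sphere = sphere 0 1"

definition to_sph :: "complex option \<Rightarrow> complex \<times> real" where
  "to_sph z = (case z of None \<Rightarrow> (0, 1)
     | Some w \<Rightarrow> (2 * w / complex_of_real (1 + (cmod w)\<^sup>2),
                  ((cmod w)\<^sup>2 - 1) / ((cmod w)\<^sup>2 + 1)))"

definition from_sph :: "complex \<times> real \<Rightarrow> complex option" where
  "from_sph x = (if snd x = 1 then None
                 else Some (fst x / complex_of_real (1 - snd x)))"

definition is_rational_fn :: "complex poly \<Rightarrow> complex poly \<Rightarrow> bool" where
  "is_rational_fn p q \<longleftrightarrow> q \<noteq> 0 \<and> coprime p q"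

definition rat_degree :: "complex poly \<Rightarrow> complex poly \<Rightarrow> nat" where
  "rat_degree p q = max (degree p) (degree q)"

definition rat_eval :: "complex poly \<Rightarrow> complex poly \<Rightarrow> complex option \<Rightarrow> complex option" where
  "rat_eval p q z = (case z of
      None \<Rightarrow> (if degree p > degree q then None
               else if degree p = degree q then Some (lead_coeff p / lead_coeff q)
               else Some 0)
    | Some w \<Rightarrow> (if poly q w = 0 then None else Some (poly p w / poly q w)))"

definition rat_sph :: "complex poly \<Rightarrow> complex poly \<Rightarrow> complex \<times> real \<Rightarrow> complex \<times> real" where
  "rat_sph p q x = to_sph (rat_eval p q (from_sph x))"

definition normal_fam_sph ::
  "((complex \<times> real) \<Rightarrow> (complex \<times> real)) set \<Rightarrow> (complex \<times> real) set \<Rightarrow> bool" where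
  "normal_fam_sph F U \<longleftrightarrow>
     (\<forall>f::nat \<Rightarrow> (complex \<times> real \<Rightarrow> complex \<times> real). (\<forall>k. f k \<in> F) \<longrightarrow>
        (\<exists>(r::nat \<Rightarrow> nat) g. strict_mono r \<and>
           (\<forall>K. compact K \<and> K \<subseteq> U \<longrightarrow> uniform_limit K (\<lambda>k. f (r k)) g sequentially)))"

definition fatou_set :: "complex poly \<Rightarrow> complex poly \<Rightarrow> (complex \<times> real) set" where
  "fatou_set p q = {x \<in> riemann_sphere. \<exists>U. openin (top_of_set riemann_sphere) U \<and> x \<in> U \<and>
       normal_fam_sph (range (\<lambda>n. (rat_sph p q ^^ n))) U}"

definition julia_set :: "complex poly \<Rightarrow> complex poly \<Rightarrow> (complex \<times> real) set" where
  "julia_set p q = riemann_sphere - fatou_set p q"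

definition T_fun :: "'a::topological_space set \<Rightarrow> 'a set \<Rightarrow> 'a set" where
  "T_fun X A = {x \<in> X. \<forall>C. C \<subseteq> X - A \<and> x \<in> C \<and> compact C \<and> connected C \<longrightarrow>
                      (top_of_set X) interior_of C = {}}"

definition T_closed :: "'a::topological_space set \<Rightarrow> 'a set \<Rightarrow> bool" where
  "T_closed X A \<longleftrightarrow> T_fun X A = A"

end

theory Submission
  imports Defs "HOL-Library.Infinite_Set" "HOL-Computational_Algebra.Fundamental_Theorem_Algebra"
begin

lemma component_meets_fiber:
  fixes R :: "'a::metric_space \<Rightarrow> 'a"
  assumes S: "compact S" and contR: "continuous_on S R"
    and openR: "\<And>U. openin (top_of_set S) U \<Longrightarrow> openin (top_of_set S) (R ` U)"
    and C: "C \<subseteq> S" "compact C" "connected C"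
    and K: "K = {z\<in>S. R z \<in> C}"
    and E: "E \<in> connected_components_of (top_of_set K)"
    and y: "y \<in> C"
  shows "\<exists>z\<in>E. R z = y"
proof (rule ccontr)
  assume nz: "\<not> (\<exists>z\<in>E. R z = y)"
  let ?X = "top_of_set K"
  have KS: "K = S \<inter> R -` C" using K by auto
  have Kc: "compact K"
  proof -
    have "closed (S \<inter> R -` C)" using S contR C(2) by (simp add: compact_imp_closed continuous_closed_preimage)
    then have "compact (S \<inter> (S \<inter> R -` C))" by (rule compact_Int_closed[OF S])
    then show ?thesis unfolding KS by (simp add: Int_absorb)
  qed
  have EQ: "E \<in> quasi_components_of ?X"
    using quasi_eq_connected_components_of[of ?X] Kc E
    by (simp add: compact_space_subtopology Hausdorff_space_subtopology)
  define F where "F = {z\<in>K. R z = y}"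
  have Fc: "compactin ?X F"
  proof -
    have "closed F" unfolding F_def
      using continuous_closed_preimage_constant[of K R y] contR Kc compact_imp_closed
      by (metis (no_types, lifting) K continuous_on_subset mem_Collect_eq subsetI)
    moreover have "F \<subseteq> K" by (auto simp: F_def)
    ultimately show ?thesis using Kc
      by (metis closed_Int_compact compactin_subtopology compactin_euclidean_iff inf.absorb_iff2 inf_commute)
  qed
  have "disjnt E F" using nz by (auto simp: disjnt_def F_def)
  then have "separated_between ?X E F"
    using separated_between_quasi_component_compact[OF EQ Fc] by simp
  then obtain U V where UV: "openin ?X U" "openin ?X V" "U \<union> V = K" "disjnt U V" "E \<subseteq> U" "F \<subseteq> V"
    unfolding separated_between_def by auto
  obtain Oo where Oo: "open Oo" "U = K \<inter> Oo" using UV(1) by (auto simp: openin_open)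
  have "U = (S \<inter> Oo) \<inter> R -` C" using Oo K by auto
  have img: "R ` U = R ` (S \<inter> Oo) \<inter> C"
    using Oo(2) K by auto
  have "openin (top_of_set S) (S \<inter> Oo)" using Oo(1) by (auto simp: openin_open)
  then have "openin (top_of_set S) (R ` (S \<inter> Oo))" by (rule openR)
  then obtain G where G: "open G" "R ` (S \<inter> Oo) = S \<inter> G" by (auto simp: openin_open)
  have "R ` U = C \<inter> G" unfolding img G(2) using C(1) by auto
  then have o1: "openin (top_of_set C) (R ` U)"
    using G(1) by (simp add: openin_open_Int)
  have "U = K - V" using UV(3,4) by (auto simp: disjnt_def)
  moreover have "closedin ?X (K - V)"
    using closedin_diff[OF closedin_topspace[of ?X] UV(2)] by simp
  ultimately have "closedin ?X U" by simp
  then have "compact U" using Kc closedin_compact by blast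
  moreover have "U \<subseteq> S" using Oo K by auto
  ultimately have "compact (R ` U)" using contR
    by (meson compact_continuous_image continuous_on_subset)
  then have c1: "closedin (top_of_set C) (R ` U)"
    using img by (intro closed_subset) (auto intro: compact_imp_closed)
  have "E \<noteq> {}" using E nonempty_connected_components_of by blast
  then have ne: "R ` U \<noteq> {}" using UV(5) by auto
  have "R ` U = C"
    using C(3) o1 c1 ne unfolding connected_clopen by blast
  then obtain z where "z \<in> U" "R z = y" using y by (metis imageE)
  then have "z \<in> F" using Oo F_def by auto
  then show False using UV `z \<in> U` by (auto simp: disjnt_def)
qed

lemma abstract_T_closed_preimage:
  fixes R :: "'a::metric_space \<Rightarrow> 'a"
  assumes S: "compact S" and contR: "continuous_on S R" and RS: "R ` S \<subseteq> S"
    and openR: "\<And>U. openin (top_of_set S) U \<Longrightarrow> openin (top_of_set S) (R ` U)"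
    and fin: "\<And>y. finite {x\<in>S. R x = y}"
    and JS: "J \<subseteq> S" and inv: "\<And>x. x \<in> S \<Longrightarrow> x \<in> J \<longleftrightarrow> R x \<in> J"
    and AJ: "A \<subseteq> J" and TA: "T_closed J A"
  shows "T_closed J {x\<in>S. R x \<in> A}"
proof -
  define B where "B = {x\<in>S. R x \<in> A}"
  have BJ: "B \<subseteq> J" using inv AJ by (auto simp: B_def)
  have sub1: "B \<subseteq> T_fun J B" using BJ by (auto simp: T_fun_def)
  have sub2: "T_fun J B \<subseteq> B"
  proof
    fix x assume xT: "x \<in> T_fun J B"
    show "x \<in> B"
    proof (rule ccontr)
      assume xB: "x \<notin> B"
      have xJ: "x \<in> J" using xT by (auto simp: T_fun_def)
      have xS: "x \<in> S" using xJ JS by auto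
      have yJ: "R x \<in> J" using inv xS xJ by auto
      have yA: "R x \<notin> A" using xB xS by (auto simp: B_def)
      have "R x \<notin> T_fun J A" using TA yA by (simp add: T_closed_def)
      then obtain C where C: "C \<subseteq> J - A" "R x \<in> C" "compact C" "connected C"
          "(top_of_set J) interior_of C \<noteq> {}"
        using yJ by (auto simp: T_fun_def)
      then obtain y' where y': "y' \<in> (top_of_set J) interior_of C" by auto
      obtain G where G: "openin (top_of_set J) G" "G \<subseteq> C" "y' \<in> G"
        using y' by (auto simp: interior_of_def)
      obtain W where W: "open W" "G = J \<inter> W" using G(1) by (auto simp: openin_open)
      have y'C: "y' \<in> C" using G by auto
      define K where "K = {z\<in>S. R z \<in> C}"
      have CS: "C \<subseteq> S" using C(1) JS by auto
      have KJ: "K \<subseteq> J" using inv C(1) by (auto simp: K_def)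
      let ?X = "top_of_set K"
      have KS: "K = S \<inter> R -` C" using K_def by auto
      have Kc: "compact K"
      proof -
        have "closed (S \<inter> R -` C)" using S contR C(3) by (simp add: compact_imp_closed continuous_closed_preimage)
        then have "compact (S \<inter> (S \<inter> R -` C))" by (rule compact_Int_closed[OF S])
        then show ?thesis unfolding KS by (simp add: Int_absorb)
      qed
      have meets: "\<And>E. E \<in> connected_components_of ?X \<Longrightarrow> \<exists>z\<in>E. R z = y'"
        using component_meets_fiber[OF S contR openR CS C(3) C(4) K_def _ y'C] by blast
      define F where "F = {z\<in>S. R z = y'}"
      have finCC: "finite (connected_components_of ?X)"
      proof -
        define ch where "ch E = (SOME z. z \<in> E \<and> R z = y')" for E
        have ch: "ch E \<in> E \<and> R (ch E) = y'" if "E \<in> connected_components_of ?X" for E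
          using meets[OF that] unfolding ch_def by (metis (mono_tags, lifting) someI_ex)
        have "inj_on ch (connected_components_of ?X)"
        proof (rule inj_onI)
          fix E1 E2 assume e: "E1 \<in> connected_components_of ?X" "E2 \<in> connected_components_of ?X" "ch E1 = ch E2"
          then have "\<not> disjnt E1 E2" using ch[OF e(1)] ch[OF e(2)] by (auto simp: disjnt_def)
          then show "E1 = E2" using connected_components_of_disjoint[OF e(1) e(2)] by blast
        qed
        moreover have "ch ` connected_components_of ?X \<subseteq> F"
        proof
          fix z assume "z \<in> ch ` connected_components_of ?X"
          then obtain E where E: "E \<in> connected_components_of ?X" "z = ch E" by auto
          have "E \<subseteq> K" using E(1) connected_components_of_subset by fastforce
          then show "z \<in> F" using ch[OF E(1)] E(2) by (auto simp: F_def K_def)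
        qed
        moreover have "finite F" unfolding F_def by (rule fin)
        ultimately show ?thesis using finite_imageD finite_subset by blast
      qed
      have xK: "x \<in> K" using C(2) xS by (auto simp: K_def)
      define D where "D = connected_component_of_set ?X x"
      have DC: "D \<in> connected_components_of ?X"
        unfolding D_def using xK by (simp add: connected_component_in_connected_components_of)
      have xD: "x \<in> D" unfolding D_def using xK by (simp add: connected_component_of_refl)
      have Dopen: "openin ?X D"
        using open_in_finite_connected_components[OF finCC DC] .
      then obtain Oo where Oo: "open Oo" "D = K \<inter> Oo" by (auto simp: openin_open)
      have Dclosed: "closedin ?X D" using closedin_connected_components_of[OF DC] .
      have Dcomp: "compact D" using Kc Dclosed closedin_compact by blast
      have Dconn: "connected D"
        using connectedin_connected_components_of[OF DC] by (simp add: connectedin_subtopology)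
      have DKs: "D \<subseteq> K" using Oo by auto
      have DJB: "D \<subseteq> J - B"
        using DKs KJ C(1) by (auto simp: K_def B_def)
      obtain W' where W': "open W'" "S \<inter> R -` W = S \<inter> W'"
        using continuous_openin_preimage_gen[OF contR W(1)] by (auto simp: openin_open)
      define N where "N = J \<inter> (Oo \<inter> W')"
      have Nopen: "openin (top_of_set J) N" unfolding N_def
        using Oo(1) W'(1) by (simp add: openin_open_Int open_Int)
      have ND: "N \<subseteq> D"
      proof
        fix z assume z: "z \<in> N"
        then have zJ: "z \<in> J" and zS: "z \<in> S" using JS by (auto simp: N_def)
        have "z \<in> S \<inter> R -` W" using W'(2) z zS by (auto simp: N_def)
        then have "R z \<in> W" by auto
        moreover have "R z \<in> J" using inv zS zJ by auto
        ultimately have "R z \<in> C" using W(2) G(2) by auto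
        then show "z \<in> D" using Oo(2) z zS by (auto simp: N_def K_def)
      qed
      obtain z0 where z0: "z0 \<in> D" "R z0 = y'" using meets[OF DC] by auto
      have z0S: "z0 \<in> S" and z0J: "z0 \<in> J" using z0 DKs KJ JS by auto
      have "z0 \<in> N"
      proof -
        have "y' \<in> W" using G W by auto
        then have "z0 \<in> S \<inter> W'" using W'(2) z0 z0S by auto
        then show ?thesis using z0J z0 Oo by (auto simp: N_def)
      qed
      then have "(top_of_set J) interior_of D \<noteq> {}"
        using interior_of_maximal[OF ND Nopen] by blast
      then have "x \<notin> T_fun J B"
        using DJB xD Dcomp Dconn by (auto simp: T_fun_def)
      then show False using xT by simp
    qed
  qed
  show ?thesis unfolding T_closed_def B_def[symmetric] using sub1 sub2 by blast
qed

definition fatR :: "(complex \<times> real \<Rightarrow> complex \<times> real) \<Rightarrow> (complex \<times> real) set" where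
  "fatR R = {x \<in> riemann_sphere. \<exists>U. openin (top_of_set riemann_sphere) U \<and> x \<in> U \<and>
       normal_fam_sph (range (\<lambda>n. (R ^^ n))) U}"

lemma fatou_set_fatR: "fatou_set p q = fatR (rat_sph p q)"
  by (simp add: fatou_set_def fatR_def)

lemma range_funpow_E:
  assumes "\<forall>k. f k \<in> range (\<lambda>n. R ^^ n)"
  obtains n where "\<And>k. f k = R ^^ n k"
proof -
  have "\<forall>k. \<exists>m. f k = R ^^ m" using assms by auto
  from choice[OF this] obtain n where "\<forall>k. f k = R ^^ n k" by blast
  then show ?thesis using that by blast
qed

lemma funpow_Suc_apply: "(R ^^ Suc n) z = (R ^^ n) (R z)"
  by (simp only: funpow_Suc_right o_apply)

lemma normal_pullback:
  assumes contR: "continuous_on riemann_sphere R" and RS: "R ` riemann_sphere \<subseteq> riemann_sphere"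
    and N: "normal_fam_sph (range (\<lambda>n. (R ^^ n))) U"
    and V: "V = riemann_sphere \<inter> R -` U"
  shows "normal_fam_sph (range (\<lambda>n. (R ^^ n))) V"
  unfolding normal_fam_sph_def
proof (intro allI impI)
  fix f :: "nat \<Rightarrow> (complex \<times> real \<Rightarrow> complex \<times> real)"
  assume "\<forall>k. f k \<in> range (\<lambda>n. R ^^ n)"
  then have "\<forall>k. \<exists>m. f k = R ^^ m" by auto
  from choice[OF this] obtain n where n0: "\<forall>k. f k = R ^^ n k" by blast
  have n: "f k = R ^^ n k" for k using n0 by blast
  show "\<exists>(r::nat \<Rightarrow> nat) g. strict_mono r \<and>
           (\<forall>K. compact K \<and> K \<subseteq> V \<longrightarrow> uniform_limit K (\<lambda>k. f (r k)) g sequentially)"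
  proof (cases "infinite {k. n k = 0}")
    case True
    define r where "r = enumerate {k. n k = 0}"
    have "strict_mono r" unfolding r_def using True by (rule strict_mono_enumerate)
    moreover have fr: "f (r k) = id" for k
      using enumerate_in_set[OF True, of k] n by (simp add: r_def)
    ultimately show ?thesis
    proof (intro exI[of _ r] exI[of _ id] conjI allI impI)
      fix K :: "(complex \<times> real) set"
      show "uniform_limit K (\<lambda>k. f (r k)) id sequentially"
        unfolding uniform_limit_iff fr by simp
    qed
  next
    case False
    then obtain K0 where K0: "\<And>k. k \<ge> K0 \<Longrightarrow> n k \<noteq> 0"
    proof -
      have "finite {k. n k = 0}" using False by simp
      then obtain m where m: "\<forall>k\<in>{k. n k = 0}. k < m" unfolding finite_nat_set_iff_bounded by blast
      show ?thesis
      proof (rule that[of m])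
        fix k assume "m \<le> k" then show "n k \<noteq> 0" using m by force
      qed
    qed
    define h where "h k = R ^^ (n (k + K0) - 1)" for k
    have hr: "\<forall>k. h k \<in> range (\<lambda>n. R ^^ n)" unfolding h_def by (intro allI rangeI)
    have "\<exists>(r::nat \<Rightarrow> nat) g. strict_mono r \<and>
           (\<forall>K. compact K \<and> K \<subseteq> U \<longrightarrow> uniform_limit K (\<lambda>k. h (r k)) g sequentially)"
    proof -
      have "\<forall>f::nat \<Rightarrow> (complex \<times> real \<Rightarrow> complex \<times> real). (\<forall>k. f k \<in> range (\<lambda>n. R ^^ n)) \<longrightarrow>
        (\<exists>(r::nat \<Rightarrow> nat) g. strict_mono r \<and>
           (\<forall>K. compact K \<and> K \<subseteq> U \<longrightarrow> uniform_limit K (\<lambda>k. f (r k)) g sequentially))"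
        using N unfolding normal_fam_sph_def .
      from this[THEN spec[of _ h], THEN mp, OF hr] show ?thesis .
    qed
    then obtain r g where r: "strict_mono r"
      and lim0: "\<forall>K. compact K \<and> K \<subseteq> U \<longrightarrow> uniform_limit K (\<lambda>k. h (r k)) g sequentially"
      by (elim exE conjE)
    have lim: "uniform_limit K (\<lambda>k. h (r k)) g sequentially" if "compact K" "K \<subseteq> U" for K
      using lim0 that by blast
    have fh: "f (r k + K0) z = h (r k) (R z)" for k z
    proof -
      have "n (r k + K0) \<noteq> 0" using K0 by simp
      then obtain m where m: "n (r k + K0) = Suc m" using not0_implies_Suc by blast
      show ?thesis unfolding n h_def m by (simp only: funpow_Suc_apply diff_Suc_1)
    qed
    show ?thesis
    proof (intro exI[of _ "\<lambda>k. r k + K0"] exI[of _ "g \<circ> R"] conjI allI impI)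
      show "strict_mono (\<lambda>k. r k + K0)" using r by (simp add: strict_mono_def)
      fix K assume K: "compact K \<and> K \<subseteq> V"
      have "K \<subseteq> riemann_sphere" using K V by auto
      then have "compact (R ` K)" using K contR
        by (intro compact_continuous_image) (auto intro: continuous_on_subset)
      moreover have "R ` K \<subseteq> U" using K V by auto
      ultimately have L: "uniform_limit (R ` K) (\<lambda>k. h (r k)) g sequentially" by (rule lim)
      show "uniform_limit K (\<lambda>k. f (r k + K0)) (g \<circ> R) sequentially"
        unfolding uniform_limit_iff
      proof (intro allI impI)
        fix e :: real assume "e > 0"
        then have "\<forall>\<^sub>F k in sequentially. \<forall>y\<in>R ` K. dist (h (r k) y) (g y) < e"
          using L unfolding uniform_limit_iff by blast
        then show "\<forall>\<^sub>F k in sequentially. \<forall>x\<in>K. dist (f (r k + K0) x) ((g \<circ> R) x) < e"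
          by eventually_elim (auto simp: fh)
      qed
    qed
  qed
qed

lemma normal_push:
  assumes N: "normal_fam_sph (range (\<lambda>n. (R ^^ n))) V"
    and L0: "compact L0" "L0 \<subseteq> V" and W: "W \<subseteq> R ` L0"
  shows "normal_fam_sph (range (\<lambda>n. (R ^^ n))) W"
  unfolding normal_fam_sph_def
proof (intro allI impI)
  fix f :: "nat \<Rightarrow> (complex \<times> real \<Rightarrow> complex \<times> real)"
  assume "\<forall>k. f k \<in> range (\<lambda>n. R ^^ n)"
  then have "\<forall>k. \<exists>m. f k = R ^^ m" by auto
  from choice[OF this] obtain n where n0: "\<forall>k. f k = R ^^ n k" by blast
  have n: "f k = R ^^ n k" for k using n0 by blast
  define h where "h k = R ^^ Suc (n k)" for k
  have hr: "\<forall>k. h k \<in> range (\<lambda>n. R ^^ n)" unfolding h_def by (intro allI rangeI)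
  have "\<exists>(r::nat \<Rightarrow> nat) g. strict_mono r \<and>
         (\<forall>K. compact K \<and> K \<subseteq> V \<longrightarrow> uniform_limit K (\<lambda>k. h (r k)) g sequentially)"
  proof -
    have "\<forall>f::nat \<Rightarrow> (complex \<times> real \<Rightarrow> complex \<times> real). (\<forall>k. f k \<in> range (\<lambda>n. R ^^ n)) \<longrightarrow>
      (\<exists>(r::nat \<Rightarrow> nat) g. strict_mono r \<and>
         (\<forall>K. compact K \<and> K \<subseteq> V \<longrightarrow> uniform_limit K (\<lambda>k. f (r k)) g sequentially))"
      using N unfolding normal_fam_sph_def .
    from this[THEN spec[of _ h], THEN mp, OF hr] show ?thesis .
  qed
  then obtain r g0 where r: "strict_mono r"
    and lim0: "\<forall>K. compact K \<and> K \<subseteq> V \<longrightarrow> uniform_limit K (\<lambda>k. h (r k)) g0 sequentially"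
    by (elim exE conjE)
  have L: "uniform_limit L0 (\<lambda>k. h (r k)) g0 sequentially" using lim0 L0 by blast
  define \<sigma> where "\<sigma> y = (SOME z. z \<in> L0 \<and> R z = y)" for y
  have \<sigma>: "\<sigma> y \<in> L0 \<and> R (\<sigma> y) = y" if "y \<in> W" for y
  proof -
    have "\<exists>z. z \<in> L0 \<and> R z = y" using W that by blast
    then show ?thesis unfolding \<sigma>_def by (rule someI_ex)
  qed
  have fh: "f k y = h k (\<sigma> y)" if "y \<in> W" for k y
  proof -
    have "h k (\<sigma> y) = (R ^^ n k) (R (\<sigma> y))" unfolding h_def by (rule funpow_Suc_apply)
    then show ?thesis using \<sigma>[OF that] n by simp
  qed
  show "\<exists>(r::nat \<Rightarrow> nat) g. strict_mono r \<and>
           (\<forall>K. compact K \<and> K \<subseteq> W \<longrightarrow> uniform_limit K (\<lambda>k. f (r k)) g sequentially)"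
  proof (intro exI[of _ r] exI[of _ "\<lambda>y. g0 (\<sigma> y)"] conjI allI impI)
    show "strict_mono r" by (rule r)
    fix K assume K: "compact K \<and> K \<subseteq> W"
    show "uniform_limit K (\<lambda>k. f (r k)) (\<lambda>y. g0 (\<sigma> y)) sequentially"
      unfolding uniform_limit_iff
    proof (intro allI impI)
      fix e :: real assume "e > 0"
      then have "\<forall>\<^sub>F k in sequentially. \<forall>z\<in>L0. dist (h (r k) z) (g0 z) < e"
        using L unfolding uniform_limit_iff by blast
      then show "\<forall>\<^sub>F k in sequentially. \<forall>y\<in>K. dist (f (r k) y) (g0 (\<sigma> y)) < e"
      proof eventually_elim
        case (elim k)
        show ?case
        proof
          fix y assume "y \<in> K"
          then have yW: "y \<in> W" using K by auto
          show "dist (f (r k) y) (g0 (\<sigma> y)) < e"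
            using elim \<sigma>[OF yW] fh[OF yW, of "r k"] by simp
        qed
      qed
    qed
  qed
qed

lemma fatR_inv:
  assumes contR: "continuous_on riemann_sphere R" and RS: "R ` riemann_sphere \<subseteq> riemann_sphere"
    and openR: "\<And>U. openin (top_of_set riemann_sphere) U \<Longrightarrow> openin (top_of_set riemann_sphere) (R ` U)"
    and x: "x \<in> riemann_sphere"
  shows "x \<in> fatR R \<longleftrightarrow> R x \<in> fatR R"
proof
  assume "R x \<in> fatR R"
  then obtain U where U: "openin (top_of_set riemann_sphere) U" "R x \<in> U"
      "normal_fam_sph (range (\<lambda>n. (R ^^ n))) U"
    unfolding fatR_def by blast
  define V where "V = riemann_sphere \<inter> R -` U"
  have "openin (top_of_set riemann_sphere) V"
    unfolding V_def using continuous_openin_preimage[OF contR _ U(1)] RS by blast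
  moreover have "x \<in> V" using x U by (auto simp: V_def)
  moreover have "normal_fam_sph (range (\<lambda>n. (R ^^ n))) V"
    using normal_pullback[OF contR RS U(3) V_def] .
  ultimately show "x \<in> fatR R" using x unfolding fatR_def by blast
next
  assume "x \<in> fatR R"
  then obtain V where V: "openin (top_of_set riemann_sphere) V" "x \<in> V"
      "normal_fam_sph (range (\<lambda>n. (R ^^ n))) V"
    unfolding fatR_def by blast
  obtain r0 where r0: "r0 > 0" "\<And>x'. x' \<in> riemann_sphere \<Longrightarrow> dist x' x < r0 \<Longrightarrow> x' \<in> V"
    using V(1,2) unfolding openin_euclidean_subtopology_iff by blast
  define L0 where "L0 = riemann_sphere \<inter> cball x (r0/2)"
  have cS: "compact riemann_sphere" by (simp add: riemann_sphere_def)
  have c1: "compact L0" unfolding L0_def using cS by (simp add: compact_Int_closed)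
  have c2: "L0 \<subseteq> V" using r0 by (auto simp: L0_def dist_commute)
  define V' where "V' = riemann_sphere \<inter> ball x (r0/2)"
  have c3: "R ` V' \<subseteq> R ` L0" by (auto simp: V'_def L0_def)
  have N: "normal_fam_sph (range (\<lambda>n. (R ^^ n))) (R ` V')"
    by (rule normal_push[OF V(3) c1 c2 c3])
  have "openin (top_of_set riemann_sphere) V'" unfolding V'_def by (simp add: openin_open_Int)
  then have "openin (top_of_set riemann_sphere) (R ` V')" by (rule openR)
  moreover have "R x \<in> R ` V'" using x r0 by (auto simp: V'_def)
  moreover have "R x \<in> riemann_sphere" using x RS by auto
  ultimately show "R x \<in> fatR R" using N unfolding fatR_def by blast
qed

definition H :: "complex \<Rightarrow> complex \<Rightarrow> complex \<times> real" where
  "H a b = (2 * a * cnj b / complex_of_real ((cmod a)\<^sup>2 + (cmod b)\<^sup>2),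
            ((cmod a)\<^sup>2 - (cmod b)\<^sup>2) / ((cmod a)\<^sup>2 + (cmod b)\<^sup>2))"

lemma sum_sq_pos: "a \<noteq> 0 \<or> b \<noteq> 0 \<Longrightarrow> (cmod a)\<^sup>2 + (cmod b)\<^sup>2 > 0"
  by (metis add_nonneg_pos add_pos_nonneg norm_ge_zero zero_less_norm_iff zero_less_power power2_eq_square zero_le_power2)

lemma H_sphere:
  assumes "a \<noteq> 0 \<or> b \<noteq> 0"
  shows "H a b \<in> riemann_sphere"
proof -
  define A where "A = (cmod a)\<^sup>2"
  define B where "B = (cmod b)\<^sup>2"
  have n: "A + B > 0" using sum_sq_pos[OF assms] by (simp add: A_def B_def)
  have nr: "cmod (complex_of_real (A + B)) = A + B" using n by (simp only: norm_of_real)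
  have "(cmod (2 * a * cnj b / complex_of_real (A + B)))\<^sup>2 = (2 * cmod a * cmod b)\<^sup>2 / (A + B)\<^sup>2"
    by (simp only: norm_divide nr norm_mult complex_mod_cnj power_divide) simp
  also have "\<dots> = 4 * A * B / (A + B)\<^sup>2" by (simp add: A_def B_def power_mult_distrib)
  finally have "(cmod (2 * a * cnj b / complex_of_real (A + B)))\<^sup>2 = 4 * A * B / (A + B)\<^sup>2" .
  moreover have "4 * A * B / (A + B)\<^sup>2 + ((A - B) / (A + B))\<^sup>2 = 1"
  proof -
    have "4 * A * B / (A + B)\<^sup>2 + ((A - B) / (A + B))\<^sup>2 = (4 * A * B + (A - B)\<^sup>2) / (A + B)\<^sup>2"
      by (simp add: power_divide add_divide_distrib)
    also have "4 * A * B + (A - B)\<^sup>2 = (A + B)\<^sup>2" by (simp add: power2_eq_square algebra_simps)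
    finally show ?thesis using n by simp
  qed
  ultimately have "(cmod (2 * a * cnj b / complex_of_real (A + B)))\<^sup>2 + ((A - B) / (A + B))\<^sup>2 = 1"
    by simp
  then show ?thesis
    unfolding riemann_sphere_def H_def A_def B_def by (simp add: norm_Pair power_divide power2_abs)
qed

lemma H_scale:
  assumes "c \<noteq> 0"
  shows "H (c * a) (c * b) = H a b"
proof -
  define C where "C = (cmod c)\<^sup>2"
  have C: "C > 0" using assms by (simp add: C_def)
  have e1: "(cmod (c * a))\<^sup>2 + (cmod (c * b))\<^sup>2 = C * ((cmod a)\<^sup>2 + (cmod b)\<^sup>2)"
    by (simp add: norm_mult power_mult_distrib C_def algebra_simps)
  have e2: "(cmod (c * a))\<^sup>2 - (cmod (c * b))\<^sup>2 = C * ((cmod a)\<^sup>2 - (cmod b)\<^sup>2)"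
    by (simp add: norm_mult power_mult_distrib C_def algebra_simps)
  have e3: "2 * (c * a) * cnj (c * b) = complex_of_real C * (2 * a * cnj b)"
  proof -
    have "c * cnj c = complex_of_real C"
      by (metis C_def complex_norm_square of_real_power)
    then show ?thesis by (simp add: algebra_simps)
  qed
  have C': "complex_of_real C \<noteq> 0" using C by simp
  show ?thesis
    unfolding H_def e1 e2 e3 of_real_mult
    by (simp only: mult_divide_mult_cancel_left[OF C'] mult_divide_mult_cancel_left[of C] C prod_eq_iff)
      (use C in simp)
qed

lemma H_a0: "a \<noteq> 0 \<Longrightarrow> H a 0 = (0, 1)"
  by (simp add: H_def)

lemma H_w1: "H w 1 = to_sph (Some w)"
  by (simp add: H_def to_sph_def add.commute mult.commute)

lemma to_sph_None: "to_sph None = (0, 1)"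
  by (simp add: to_sph_def)

lemma H_b: "b \<noteq> 0 \<Longrightarrow> H a b = H (a / b) 1"
  using H_scale[of b "a / b" 1] by simp

lemma H_a: "a \<noteq> 0 \<Longrightarrow> H a b = H 1 (b / a)"
  using H_scale[of a 1 "b / a"] by simp

lemma sphere_eq: "x \<in> riemann_sphere \<Longrightarrow> (cmod (fst x))\<^sup>2 + (snd x)\<^sup>2 = 1"
  unfolding riemann_sphere_def by (cases x) (simp add: norm_Pair)

definition phi1 :: "complex \<times> real \<Rightarrow> complex" where
  "phi1 x = fst x / complex_of_real (1 - snd x)"

definition phi2 :: "complex \<times> real \<Rightarrow> complex" where
  "phi2 x = cnj (fst x) / complex_of_real (1 + snd x)"

lemma H_z_real:
  assumes "(cmod z)\<^sup>2 + s\<^sup>2 = 1" "s \<noteq> 1"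
  shows "H z (complex_of_real (1 - s)) = (z, s)"
proof -
  have d: "(cmod z)\<^sup>2 + (cmod (complex_of_real (1 - s)))\<^sup>2 = 2 * (1 - s)"
    using assms(1) by (simp only: norm_of_real power2_abs complex_mod_cnj) (simp add: power2_eq_square algebra_simps)
  have ne: "1 - s \<noteq> 0" using assms(2) by simp
  have "2 * z * cnj (complex_of_real (1 - s)) / complex_of_real (2 * (1 - s)) = z"
    using ne by (simp add: field_simps)
  moreover have "((cmod z)\<^sup>2 - (cmod (complex_of_real (1 - s)))\<^sup>2) / (2 * (1 - s)) = s"
  proof -
    have "(cmod z)\<^sup>2 - (cmod (complex_of_real (1 - s)))\<^sup>2 = 2 * (1 - s) * s"
      using assms(1) by (simp only: norm_of_real power2_abs complex_mod_cnj) (simp add: power2_eq_square algebra_simps)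
    then show ?thesis using ne by simp
  qed
  ultimately show ?thesis unfolding H_def d by simp
qed

lemma H_real_z:
  assumes "(cmod z)\<^sup>2 + s\<^sup>2 = 1" "s \<noteq> -1"
  shows "H (complex_of_real (1 + s)) (cnj z) = (z, s)"
proof -
  have d: "(cmod (complex_of_real (1 + s)))\<^sup>2 + (cmod (cnj z))\<^sup>2 = 2 * (1 + s)"
    using assms(1) by (simp only: norm_of_real power2_abs complex_mod_cnj) (simp add: power2_eq_square algebra_simps)
  have ne: "1 + s \<noteq> 0" using assms(2) by (metis add.commute add_eq_0_iff)
  have ne2: "complex_of_real (2 * (1 + s)) \<noteq> 0" by (simp only: of_real_eq_0_iff) (use ne in simp)
  have "2 * complex_of_real (1 + s) * cnj (cnj z) = complex_of_real (2 * (1 + s)) * z"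
    by (simp only: of_real_mult of_real_numeral complex_cnj_cnj mult.assoc)
  then have "2 * complex_of_real (1 + s) * cnj (cnj z) / complex_of_real (2 * (1 + s)) = z"
    using ne2 by simp
  moreover have "((cmod (complex_of_real (1 + s)))\<^sup>2 - (cmod (cnj z))\<^sup>2) / (2 * (1 + s)) = s"
  proof -
    have "(cmod (complex_of_real (1 + s)))\<^sup>2 - (cmod (cnj z))\<^sup>2 = 2 * (1 + s) * s"
      using assms(1) by (simp only: norm_of_real power2_abs complex_mod_cnj) (simp add: power2_eq_square algebra_simps)
    then show ?thesis using ne by simp
  qed
  ultimately show ?thesis unfolding H_def d by simp
qed

lemma c1_phi1:
  assumes "x \<in> riemann_sphere" "snd x \<noteq> 1"
  shows "H (phi1 x) 1 = x"
proof -
  have ne: "complex_of_real (1 - snd x) \<noteq> 0" using assms(2) by simp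
  have "H (phi1 x) 1 = H (complex_of_real (1 - snd x) * phi1 x) (complex_of_real (1 - snd x) * 1)"
    using H_scale[OF ne, of "phi1 x" 1] by (simp only: mult_1_right)
  also have "\<dots> = H (fst x) (complex_of_real (1 - snd x))"
    using ne by (simp add: phi1_def)
  also have "\<dots> = x" using H_z_real[OF sphere_eq[OF assms(1)] assms(2)] by simp
  finally show ?thesis .
qed

lemma c2_phi2:
  assumes "x \<in> riemann_sphere" "snd x \<noteq> -1"
  shows "H 1 (phi2 x) = x"
proof -
  have ne: "complex_of_real (1 + snd x) \<noteq> 0" using assms(2)
    by (metis add.commute add_eq_0_iff of_real_eq_0_iff)
  have "H 1 (phi2 x) = H (complex_of_real (1 + snd x) * 1) (complex_of_real (1 + snd x) * phi2 x)"
    using H_scale[OF ne, of 1 "phi2 x"] by (simp only: mult_1_right)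
  also have "\<dots> = H (complex_of_real (1 + snd x)) (cnj (fst x))"
    using ne by (simp add: phi2_def)
  also have "\<dots> = x" using H_real_z[OF sphere_eq[OF assms(1)] assms(2)] by simp
  finally show ?thesis .
qed

lemma snd_c1: "snd (H w 1) < 1"
proof -
  have p: "1 + (cmod w)\<^sup>2 > 0" by (simp add: add_pos_nonneg)
  then show ?thesis unfolding H_def by (simp add: divide_less_eq add.commute)
qed

lemma snd_c2: "snd (H 1 t) > -1"
proof -
  have p: "1 + (cmod t)\<^sup>2 > 0" by (simp add: add_pos_nonneg)
  then show ?thesis unfolding H_def by (simp add: less_divide_eq)
qed

lemma phi1_c1: "phi1 (H w 1) = w"
proof -
  have pos: "(cmod w)\<^sup>2 + 1 > 0" by (simp add: add_nonneg_pos)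
  have "1 - ((cmod w)\<^sup>2 - 1) / ((cmod w)\<^sup>2 + 1) = 2 / ((cmod w)\<^sup>2 + 1)"
    using pos by (simp add: field_simps)
  then show ?thesis unfolding phi1_def H_def using pos
    by (simp add: field_simps del: of_real_add of_real_power)
qed

lemma N_H: "(0::complex, 1::real) = H 1 0"
  by (simp add: H_def)

context
  fixes p q :: "complex poly"
  assumes rat: "is_rational_fn p q" and deg: "rat_degree p q \<ge> 2"
begin

lemma q_nz: "q \<noteq> 0" using rat by (simp add: is_rational_fn_def)

lemma no_common_root: "\<not> (poly p w = 0 \<and> poly q w = 0)"
proof
  assume "poly p w = 0 \<and> poly q w = 0"
  then have "[:-w, 1:] dvd p" "[:-w, 1:] dvd q" by (simp_all add: poly_eq_0_iff_dvd)
  then have "is_unit [:-w, 1:]"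
    using rat coprime_common_divisor by (auto simp: is_rational_fn_def)
  then show False by (simp add: is_unit_iff_degree)
qed

lemma G1_eq: "to_sph (rat_eval p q (Some w)) = H (poly p w) (poly q w)"
proof (cases "poly q w = 0")
  case True
  then have "poly p w \<noteq> 0" using no_common_root by blast
  then show ?thesis using True by (simp add: rat_eval_def to_sph_None H_a0)
next
  case False
  then show ?thesis by (simp add: rat_eval_def H_w1[symmetric] H_b[OF False])
qed

lemma rat_sph_G1: "snd x \<noteq> 1 \<Longrightarrow> rat_sph p q x = H (poly p (phi1 x)) (poly q (phi1 x))"
  by (simp add: rat_sph_def from_sph_def phi1_def G1_eq)

definition dd where "dd = rat_degree p q"
definition P2 where "P2 = monom 1 (dd - degree p) * reflect_poly p"
definition Q2 where "Q2 = monom 1 (dd - degree q) * reflect_poly q"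

lemma deg_le: "degree p \<le> dd" "degree q \<le> dd" by (simp_all add: dd_def rat_degree_def)

lemma poly_refl_nz:
  fixes r :: "complex poly"
  assumes "degree r \<le> dd" "t \<noteq> 0"
  shows "poly (monom 1 (dd - degree r) * reflect_poly r) t = t ^ dd * poly r (inverse t)"
proof -
  have "poly (monom 1 (dd - degree r) * reflect_poly r) t
        = t ^ (dd - degree r) * (t ^ degree r * poly r (inverse t))"
    using assms(2) by (simp add: poly_monom poly_reflect_poly_nz)
  also have "\<dots> = t ^ dd * poly r (inverse t)"
    using assms(1) by (simp add: mult.assoc[symmetric] power_add[symmetric])
  finally show ?thesis .
qed

lemma poly_refl_0:
  fixes r :: "complex poly"
  assumes "degree r \<le> dd"
  shows "poly (monom 1 (dd - degree r) * reflect_poly r) 0 = coeff r dd"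
proof (cases "degree r = dd")
  case True then show ?thesis by (simp add: poly_monom)
next
  case False
  then have "degree r < dd" using assms by simp
  then show ?thesis by (simp add: poly_monom coeff_eq_0 zero_power)
qed

lemma P2_nz: "t \<noteq> 0 \<Longrightarrow> poly P2 t = t ^ dd * poly p (inverse t)"
  unfolding P2_def using poly_refl_nz deg_le by blast
lemma Q2_nz: "t \<noteq> 0 \<Longrightarrow> poly Q2 t = t ^ dd * poly q (inverse t)"
  unfolding Q2_def using poly_refl_nz deg_le by blast
lemma P2_0: "poly P2 0 = coeff p dd"
  unfolding P2_def using poly_refl_0 deg_le by blast
lemma Q2_0: "poly Q2 0 = coeff q dd"
  unfolding Q2_def using poly_refl_0 deg_le by blast

lemma dd_cases: "(dd = degree p \<and> p \<noteq> 0) \<or> (dd = degree q \<and> q \<noteq> 0)"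
  using deg q_nz by (auto simp: dd_def rat_degree_def max_def)

lemma infinity_eq: "to_sph (rat_eval p q None) = H (coeff p dd) (coeff q dd)"
proof (cases "degree p > degree q")
  case True
  then have d: "dd = degree p" by (simp add: dd_def rat_degree_def)
  have "p \<noteq> 0" using True by auto
  then show ?thesis using True d
    by (simp add: rat_eval_def to_sph_None H_a0 coeff_eq_0)
next
  case False
  then have d: "dd = degree q" by (simp add: dd_def rat_degree_def)
  have lq: "lead_coeff q \<noteq> 0" using q_nz by simp
  show ?thesis
  proof (cases "degree p = degree q")
    case True
    then show ?thesis using d lq by (simp add: rat_eval_def H_w1[symmetric] H_b[OF lq])
  next
    case False
    then have "degree p < degree q" using \<open>\<not> degree p > degree q\<close> by simp
    then show ?thesis using d lq
      by (simp add: rat_eval_def H_w1[symmetric] H_b[OF lq] coeff_eq_0)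
  qed
qed

lemma G2_nz: "t \<noteq> 0 \<Longrightarrow> H (poly P2 t) (poly Q2 t) = H (poly p (inverse t)) (poly q (inverse t))"
  by (simp add: P2_nz Q2_nz H_scale)

lemma G2_0: "H (poly P2 0) (poly Q2 0) = to_sph (rat_eval p q None)"
  by (simp add: P2_0 Q2_0 infinity_eq)

lemma no_common_root2: "\<not> (poly P2 t = 0 \<and> poly Q2 t = 0)"
proof (cases "t = 0")
  case True
  then show ?thesis using dd_cases by (auto simp: P2_0 Q2_0)
next
  case False
  then show ?thesis using no_common_root[of "inverse t"] by (simp add: P2_nz Q2_nz)
qed

lemma rat_sph_G2:
  assumes x: "x \<in> riemann_sphere" and s: "snd x \<noteq> -1"
  shows "rat_sph p q x = H (poly P2 (phi2 x)) (poly Q2 (phi2 x))"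
proof (cases "snd x = 1")
  case True
  have "(cmod (fst x))\<^sup>2 = 0" using sphere_eq[OF x] True by simp
  then have "fst x = 0" by simp
  then have "phi2 x = 0" by (simp add: phi2_def)
  then show ?thesis using True by (simp add: G2_0 rat_sph_def from_sph_def)
next
  case False
  have "(cmod (fst x))\<^sup>2 = (1 - snd x) * (1 + snd x)"
    using sphere_eq[OF x] by (simp add: algebra_simps power2_eq_square)
  moreover have "(1 - snd x) * (1 + snd x) \<noteq> 0" using False s
    by (metis add.commute add_eq_0_iff eq_iff_diff_eq_0 mult_eq_0_iff)
  ultimately have z: "fst x \<noteq> 0" by auto
  have ne1: "complex_of_real (1 - snd x) \<noteq> 0" using False by simp
  have ne2: "complex_of_real (1 + snd x) \<noteq> 0" using s
    by (metis add.commute add_eq_0_iff of_real_eq_0_iff)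
  have t: "phi2 x \<noteq> 0" using z ne2 by (simp add: phi2_def)
  have cz: "cnj (fst x) * fst x = complex_of_real (1 - snd x) * complex_of_real (1 + snd x)"
  proof -
    have "cnj (fst x) * fst x = complex_of_real ((cmod (fst x))\<^sup>2)"
      by (metis complex_norm_square mult.commute)
    also have "\<dots> = complex_of_real (1 - snd x) * complex_of_real (1 + snd x)"
      using \<open>(cmod (fst x))\<^sup>2 = _\<close> by (simp only: of_real_mult)
    finally show ?thesis .
  qed
  have "phi2 x * phi1 x = (cnj (fst x) * fst x) / (complex_of_real (1 + snd x) * complex_of_real (1 - snd x))"
    unfolding phi1_def phi2_def by (rule times_divide_times_eq)
  also have "\<dots> = 1" unfolding cz using ne1 ne2 by simp
  finally have "phi2 x * phi1 x = 1" .
  then have "inverse (phi2 x) = phi1 x" by (rule inverse_unique)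
  then show ?thesis using False t by (simp add: G2_nz rat_sph_G1)
qed

end

lemma H_cont:
  assumes "continuous_on A f" "continuous_on A g" "\<And>u. u \<in> A \<Longrightarrow> f u \<noteq> 0 \<or> g u \<noteq> 0"
  shows "continuous_on A (\<lambda>u. H (f u) (g u))"
proof -
  have nz: "(cmod (f u))\<^sup>2 + (cmod (g u))\<^sup>2 \<noteq> 0" if "u \<in> A" for u
    using sum_sq_pos[OF assms(3)[OF that]] by (metis order_less_irrefl)
  show ?thesis unfolding H_def
    by (intro continuous_intros assms) (use nz in \<open>auto simp del: of_real_add of_real_power\<close>)
qed

lemma to_sph_S: "to_sph z \<in> riemann_sphere"
proof (cases z)
  case None
  then show ?thesis using H_sphere[of 1 0] by (simp add: to_sph_None N_H[symmetric])
next
  case (Some w)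
  then show ?thesis using H_sphere[of w 1] by (simp add: H_w1)
qed

lemma open_snd_neq: "open {x::complex \<times> real. snd x \<noteq> c}"
  by (rule open_Collect_neq) (auto intro: continuous_intros)

lemma phi1_cont: "continuous_on {x. snd x \<noteq> 1} phi1"
  unfolding phi1_def by (intro continuous_intros) auto

lemma phi2_cont: "continuous_on {x. snd x \<noteq> -1} phi2"
proof -
  have "complex_of_real (1 + snd x) \<noteq> 0" if "snd x \<noteq> -1" for x :: "complex \<times> real"
    using that by (metis add.commute add_eq_0_iff of_real_eq_0_iff)
  then show ?thesis unfolding phi2_def by (intro continuous_intros) auto
qed

context
  fixes p q :: "complex poly"
  assumes rat: "is_rational_fn p q" and deg: "rat_degree p q \<ge> 2"
begin

lemma R_S: "rat_sph p q x \<in> riemann_sphere"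
  by (simp add: rat_sph_def to_sph_S)

lemma R_cont: "continuous_on riemann_sphere (rat_sph p q)"
proof -
  let ?S = riemann_sphere
  let ?A = "?S \<inter> {x. snd x \<noteq> 1}" and ?B = "?S \<inter> {x. snd x \<noteq> -1}"
  have AB: "?A \<union> ?B = ?S" by auto
  have cA: "continuous_on ?A (rat_sph p q)"
  proof (rule continuous_on_eq)
    show "continuous_on ?A (\<lambda>x. H (poly p (phi1 x)) (poly q (phi1 x)))"
      by (rule H_cont, (auto intro!: continuous_intros continuous_on_subset[OF phi1_cont])[2],
          meson no_common_root[OF rat deg])
    show "\<And>x. x \<in> ?A \<Longrightarrow> H (poly p (phi1 x)) (poly q (phi1 x)) = rat_sph p q x"
      using rat_sph_G1[OF rat deg] by auto
  qed
  have cB: "continuous_on ?B (rat_sph p q)"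
  proof (rule continuous_on_eq)
    show "continuous_on ?B (\<lambda>x. H (poly (P2 p q) (phi2 x)) (poly (Q2 p q) (phi2 x)))"
      by (rule H_cont, (auto intro!: continuous_intros continuous_on_subset[OF phi2_cont])[2],
          meson no_common_root2[OF rat deg])
    show "\<And>x. x \<in> ?B \<Longrightarrow> H (poly (P2 p q) (phi2 x)) (poly (Q2 p q) (phi2 x)) = rat_sph p q x"
      using rat_sph_G2[OF rat deg] by auto
  qed
  have oA: "openin (top_of_set (?A \<union> ?B)) ?A"
    unfolding AB by (rule openin_open_Int[OF open_snd_neq])
  have oB: "openin (top_of_set (?A \<union> ?B)) ?B"
    unfolding AB by (rule openin_open_Int[OF open_snd_neq])
  show ?thesis using continuous_on_Un_local_open[OF oA oB cA cB] AB by simp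
qed

end

lemma min3: "(0::real) < B \<Longrightarrow> 0 < C \<Longrightarrow> \<exists>t>0. t < 1 \<and> t < B \<and> t < C"
  by (rule exI[of _ "min (1/2) (min (B/2) (C/2))"]) auto

lemma local_decrease:
  fixes f :: "complex poly"
  assumes nc: "\<not> constant (poly f)" and c: "poly f c \<noteq> 0" and e: "e > 0"
  shows "\<exists>w. cmod (w - c) < e \<and> cmod (poly f w) < cmod (poly f c)"
proof -
  obtain q where q: "psize q = psize f" "\<forall>x. poly q x = poly f (c + x)"
    using poly_offset[of f c] by blast
  have qnc: "\<not> constant (poly q)"
    using nc q(2) unfolding constant_def by (metis add.commute diff_add_cancel)
  let ?a0 = "poly q 0"
  have a00: "?a0 \<noteq> 0" using c q(2) by simp
  let ?r = "smult (inverse ?a0) q"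
  have rnc: "\<not> constant (poly ?r)"
    using qnc a00 unfolding constant_def by simp
  have r01: "poly ?r 0 = 1" using a00 by simp
  have mrmq_eq: "cmod (poly ?r w) < 1 \<longleftrightarrow> cmod (poly q w) < cmod ?a0" for w
    using a00 by (simp add: norm_divide divide_less_eq field_simps)
  from poly_decompose[OF rnc] obtain k a s where
    kas: "a \<noteq> 0" "k \<noteq> 0" "\<forall>z. poly ?r z = poly ?r 0 + z^k * poly (pCons a s) z" by blast
  have 01: "\<not> constant (poly (pCons 1 (monom a (k - 1))))"
    unfolding constant_def poly_pCons poly_monom
    by (metis add_cancel_left_right kas(1) mult.commute mult_cancel_right2 power_one)
  obtain w where w: "poly (pCons 1 (monom a (k - 1))) w = 0"
    using fundamental_theorem_of_algebra[OF 01] by blast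
  have wm1: "w^k * a = - 1"
  proof -
    have "1 + w * (a * w ^ (k - 1)) = 0" using w by (simp add: poly_monom)
    moreover have "w * w ^ (k - 1) = w ^ k" using kas(2) by (metis power_eq_if)
    ultimately show ?thesis by (metis add_eq_0_iff mult.commute mult.left_commute)
  qed
  have "w \<noteq> 0" using kas(2) wm1 by (auto simp add: power_0_left)
  from poly_bound_exists[of "cmod w" s] obtain m where
    m: "m > 0" "\<forall>z. cmod z \<le> cmod w \<longrightarrow> cmod (poly s z) \<le> m" by blast
  have inv0: "0 < inverse (cmod w ^ (k + 1) * m)"
    by (simp add: \<open>w \<noteq> 0\<close> m(1))
  have we: "0 < e / cmod w" using e \<open>w \<noteq> 0\<close> by simp
  obtain t where t: "t > 0" "t < 1" "t < inverse (cmod w ^ (k + 1) * m)" "t < e / cmod w"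
    using min3[OF inv0 we] by blast
  let ?ct = "complex_of_real t"
  let ?w = "?ct * w"
  have "1 + ?w^k * (a + ?w * poly s ?w) = 1 + ?ct^k * (w^k * a) + ?w^k * ?w * poly s ?w"
    using kas(1) by (simp add: algebra_simps power_mult_distrib)
  also have "\<dots> = complex_of_real (1 - t^k) + ?w^k * ?w * poly s ?w"
    unfolding wm1 by simp
  finally have "cmod (1 + ?w^k * (a + ?w * poly s ?w)) =
    cmod (complex_of_real (1 - t^k) + ?w^k * ?w * poly s ?w)"
    by metis
  with norm_triangle_ineq[of "complex_of_real (1 - t^k)" "?w^k * ?w * poly s ?w"]
  have 11: "cmod (1 + ?w^k * (a + ?w * poly s ?w)) \<le> \<bar>1 - t^k\<bar> + cmod (?w^k * ?w * poly s ?w)"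
    unfolding norm_of_real by simp
  have ath: "\<And>x t::real. 0 \<le> x \<Longrightarrow> x < t \<Longrightarrow> t \<le> 1 \<Longrightarrow> \<bar>1 - t\<bar> + x < 1"
    by arith
  have tw: "cmod ?w \<le> cmod w"
    by (smt (verit) mult_le_cancel_right2 norm_ge_zero norm_mult norm_of_real t)
  have "t * (cmod w ^ (k + 1) * m) < 1"
    by (smt (verit, best) inv0 inverse_positive_iff_positive left_inverse mult_strict_right_mono t(3))
  with zero_less_power[OF t(1), of k] have 30: "t^k * (t* (cmod w ^ (k + 1) * m)) < t^k"
    by simp
  have "cmod (?w^k * ?w * poly s ?w) = t^k * (t* (cmod w ^ (k + 1) * cmod (poly s ?w)))"
    using \<open>w \<noteq> 0\<close> t(1) by (simp add: algebra_simps norm_power norm_mult)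
  with 30 have 120: "cmod (?w^k * ?w * poly s ?w) < t^k"
    by (smt (verit, ccfv_SIG) m(2) mult_left_mono norm_ge_zero t(1) tw zero_le_power)
  from power_strict_mono[OF t(2), of k] t(1) kas(2) have 121: "t^k \<le> 1"
    by auto
  from ath[OF norm_ge_zero[of "?w^k * ?w * poly s ?w"] 120 121]
  have "cmod (poly ?r ?w) < 1"
    by (smt (verit) "11" kas(3) poly_pCons r01)
  then have "cmod (poly q ?w) < cmod ?a0" using mrmq_eq by blast
  then have "cmod (poly f (c + ?w)) < cmod (poly f c)" using q(2) by simp
  moreover have "cmod (c + ?w - c) < e"
  proof -
    have "cmod ?w = t * cmod w" using t(1) by (simp add: norm_mult)
    also have "\<dots> < e / cmod w * cmod w" using t(4) \<open>w \<noteq> 0\<close> by (intro mult_strict_right_mono) auto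
    also have "\<dots> = e" using \<open>w \<noteq> 0\<close> by simp
    finally show ?thesis by simp
  qed
  ultimately show ?thesis by blast
qed

lemma local_root:
  fixes P Q :: "complex poly"
  assumes f0: "P - smult v0 Q \<noteq> 0" and u0: "poly P u0 = v0 * poly Q u0" and e: "e > 0"
  shows "\<exists>\<delta>>0. \<forall>v. cmod (v - v0) < \<delta> \<longrightarrow> (\<exists>u. cmod (u - u0) < e \<and> poly P u = v * poly Q u)"
proof -
  define f0 where "f0 = P - smult v0 Q"
  have pf0: "poly f0 z = poly P z - v0 * poly Q z" for z by (simp add: f0_def)
  have fin: "finite {z. poly f0 z = 0}" using f0 poly_roots_finite unfolding f0_def by blast
  obtain d0 where d0: "d0 > 0" "\<And>x. x \<in> {z. poly f0 z = 0} \<Longrightarrow> x \<noteq> u0 \<Longrightarrow> d0 \<le> dist u0 x"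
    using finite_set_avoid[OF fin, of u0] by blast
  define r where "r = min (e/2) (d0/2)"
  have r: "r > 0" "r < e" "r < d0" using e d0 by (auto simp: r_def)
  let ?G = "sphere u0 r"
  have Gne: "?G \<noteq> {}" using r by (simp add: sphere_eq_empty)
  have Gnz: "poly f0 z \<noteq> 0" if "z \<in> ?G" for z
  proof
    assume "poly f0 z = 0"
    moreover have "z \<noteq> u0" using that r by auto
    ultimately have "d0 \<le> dist u0 z" using d0 by blast
    then show False using that r by simp
  qed
  obtain xm where xm: "xm \<in> ?G" "\<And>y. y \<in> ?G \<Longrightarrow> cmod (poly f0 xm) \<le> cmod (poly f0 y)"
    using continuous_attains_inf[OF compact_sphere Gne, of "\<lambda>z. cmod (poly f0 z)", OF continuous_on_norm[OF continuous_on_poly[OF continuous_on_id]]]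
    by blast
  define m where "m = cmod (poly f0 xm)"
  have m: "m > 0" using Gnz[OF xm(1)] by (simp add: m_def)
  have mG: "\<And>y. y \<in> ?G \<Longrightarrow> m \<le> cmod (poly f0 y)" using xm(2) by (simp add: m_def)
  have cbne: "cball u0 r \<noteq> {}" using r by simp
  obtain xM where xM: "xM \<in> cball u0 r" "\<And>y. y \<in> cball u0 r \<Longrightarrow> cmod (poly Q y) \<le> cmod (poly Q xM)"
    using continuous_attains_sup[OF compact_cball cbne, of "\<lambda>z. cmod (poly Q z)", OF continuous_on_norm[OF continuous_on_poly[OF continuous_on_id]]]
    by blast
  define M where "M = cmod (poly Q xM)"
  have M: "M \<ge> 0" "\<And>y. y \<in> cball u0 r \<Longrightarrow> cmod (poly Q y) \<le> M" using xM(2) by (auto simp: M_def)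
  define \<delta> where "\<delta> = m / (2 * (M + 1))"
  have \<delta>: "\<delta> > 0" using m M by (simp add: \<delta>_def)
  have \<delta>M: "\<delta> * M < m / 2"
  proof -
    have "\<delta> * M = (m / 2) * (M / (M + 1))" using M by (simp add: \<delta>_def field_simps)
    also have "\<dots> < (m / 2) * 1" using m M by (intro mult_strict_left_mono) auto
    finally show ?thesis by simp
  qed
  show ?thesis
  proof (intro exI[of _ \<delta>] conjI allI impI)
    show "\<delta> > 0" by (rule \<delta>)
    fix v assume v: "cmod (v - v0) < \<delta>"
    define f where "f = P - smult v Q"
    have pf: "poly f u = poly f0 u - (v - v0) * poly Q u" for u
      by (simp add: f_def pf0 algebra_simps)
    have close: "cmod (poly f u - poly f0 u) < m / 2" if "u \<in> cball u0 r" for u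
    proof -
      have "cmod (poly f u - poly f0 u) = cmod (v - v0) * cmod (poly Q u)"
        by (simp add: pf norm_mult norm_minus_commute)
      also have "\<dots> \<le> \<delta> * M"
        using v M(2)[OF that] \<delta> by (intro mult_mono) auto
      finally show ?thesis using \<delta>M by simp
    qed
    have u0c: "u0 \<in> cball u0 r" using r by simp
    have fu0: "cmod (poly f u0) < m / 2"
      using close[OF u0c] u0 by (simp add: pf0)
    have fG: "cmod (poly f u) > m / 2" if "u \<in> ?G" for u
    proof -
      have "u \<in> cball u0 r" using that by simp
      then have "cmod (poly f u - poly f0 u) < m / 2" by (rule close)
      moreover have "m \<le> cmod (poly f0 u)" using mG[OF that] .
      moreover have "cmod (poly f0 u) \<le> cmod (poly f u) + cmod (poly f u - poly f0 u)"
        by (metis norm_triangle_ineq4 add_diff_cancel_left' diff_add_cancel norm_minus_commute norm_triangle_sub)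
      ultimately show ?thesis by linarith
    qed
    obtain u1 where u1: "u1 \<in> cball u0 r" "\<And>y. y \<in> cball u0 r \<Longrightarrow> cmod (poly f u1) \<le> cmod (poly f y)"
      using continuous_attains_inf[OF compact_cball cbne, of "\<lambda>z. cmod (poly f z)", OF continuous_on_norm[OF continuous_on_poly[OF continuous_on_id]]]
      by blast
    have fu1: "cmod (poly f u1) < m / 2" using u1(2)[OF u0c] fu0 by simp
    have "u1 \<notin> ?G" using fG fu1 by force
    then have du1: "dist u0 u1 < r" using u1(1) by simp
    have "poly f u1 = 0"
    proof (rule ccontr)
      assume nz: "poly f u1 \<noteq> 0"
      have ptG: "u0 + of_real r \<in> ?G" using r by (simp add: dist_norm)
      have nc: "\<not> constant (poly f)"
      proof
        assume "constant (poly f)"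
        then have "poly f u0 = poly f (u0 + of_real r)" unfolding constant_def by blast
        then show False using fu0 fG[OF ptG] by simp
      qed
      have "r - dist u0 u1 > 0" using du1 by simp
      from local_decrease[OF nc nz this] obtain w where
        w: "cmod (w - u1) < r - dist u0 u1" "cmod (poly f w) < cmod (poly f u1)" by blast
      have "dist u0 w \<le> dist u0 u1 + dist u1 w" by (rule dist_triangle)
      also have "dist u1 w = cmod (w - u1)" by (simp add: dist_norm norm_minus_commute)
      finally have "w \<in> cball u0 r" using w(1) by simp
      then show False using u1(2) w(2) by force
    qed
    then have "poly P u1 = v * poly Q u1" by (simp add: f_def)
    moreover have "cmod (u1 - u0) < e" using du1 r by (simp add: dist_norm norm_minus_commute)
    ultimately show "\<exists>u. cmod (u - u0) < e \<and> poly P u = v * poly Q u" by blast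
  qed
qed

lemma isCont_eps:
  fixes f :: "'a::real_normed_vector \<Rightarrow> 'b::real_normed_vector"
  assumes "isCont f a" "e > 0"
  shows "\<exists>d>0. \<forall>x. dist x a < d \<longrightarrow> dist (f x) (f a) < e"
proof -
  obtain s where s: "s > 0" "\<forall>x. x \<noteq> a \<and> norm (x - a) < s \<longrightarrow> norm (f x - f a) < e"
    using assms unfolding isCont_def LIM_eq by blast
  show ?thesis
  proof (intro exI[of _ s] conjI allI impI)
    show "s > 0" by (rule s)
    fix x assume "dist x a < s"
    then show "dist (f x) (f a) < e" using s assms(2) by (cases "x = a") (auto simp: dist_norm)
  qed
qed

lemma phi1_isCont: "snd y \<noteq> 1 \<Longrightarrow> isCont phi1 y"
  using phi1_cont continuous_on_eq_continuous_at[OF open_snd_neq] by blast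

lemma phi2_isCont: "snd y \<noteq> -1 \<Longrightarrow> isCont phi2 y"
  using phi2_cont continuous_on_eq_continuous_at[OF open_snd_neq] by blast

lemma chart_open:
  fixes c :: "complex \<Rightarrow> complex \<times> real" and P Q :: "complex poly"
  assumes cc: "continuous_on UNIV c" and cS: "\<And>u. c u \<in> riemann_sphere"
    and RH: "\<And>u. Rf (c u) = H (poly P u) (poly Q u)"
    and ncr: "\<And>u. \<not> (poly P u = 0 \<and> poly Q u = 0)"
    and nc1: "\<And>v. P - smult v Q \<noteq> 0" and nc2: "\<And>v. Q - smult v P \<noteq> 0"
    and U: "openin (top_of_set riemann_sphere) U" and u0: "c u0 \<in> U"
  shows "\<exists>\<eta>>0. \<forall>y\<in>riemann_sphere. dist y (Rf (c u0)) < \<eta> \<longrightarrow> y \<in> Rf ` U"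
proof -
  obtain O' where O': "open O'" "U = riemann_sphere \<inter> O'" using U by (auto simp: openin_open)
  have "open (c -` O')"
    using continuous_open_vimage[OF O'(1)] cc continuous_on_eq_continuous_at[OF open_UNIV] by blast
  moreover have "u0 \<in> c -` O'" using u0 O' by auto
  ultimately obtain \<epsilon> where \<epsilon>: "\<epsilon> > 0" "ball u0 \<epsilon> \<subseteq> c -` O'" using open_contains_ball by blast
  have inU: "c u \<in> U" if "cmod (u - u0) < \<epsilon>" for u
    using \<epsilon>(2) that cS O'(2) by (auto simp: dist_norm norm_minus_commute)
  show ?thesis
  proof (cases "poly Q u0 = 0")
    case False
    define v0 where "v0 = poly P u0 / poly Q u0"
    have pv0: "poly P u0 = v0 * poly Q u0" using False by (simp add: v0_def)
    obtain \<delta> where \<delta>: "\<delta> > 0"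
      "\<And>v. cmod (v - v0) < \<delta> \<Longrightarrow> \<exists>u. cmod (u - u0) < \<epsilon> \<and> poly P u = v * poly Q u"
      using local_root[OF nc1 pv0 \<epsilon>(1)] by blast
    define y0 where "y0 = Rf (c u0)"
    have y0: "y0 = H v0 1" unfolding y0_def RH v0_def using H_b[OF False] .
    have s0: "snd y0 < 1" unfolding y0 by (rule snd_c1)
    have py0: "phi1 y0 = v0" unfolding y0 by (rule phi1_c1)
    obtain \<eta>1 where \<eta>1: "\<eta>1 > 0" "\<And>y. dist y y0 < \<eta>1 \<Longrightarrow> dist (phi1 y) (phi1 y0) < \<delta>"
      using isCont_eps[OF phi1_isCont \<delta>(1), of y0] s0 by auto
    define \<eta> where "\<eta> = min \<eta>1 (1 - snd y0)"
    have \<eta>: "\<eta> > 0" using \<eta>1 s0 by (simp add: \<eta>_def)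
    show ?thesis
    proof (intro exI[of _ \<eta>] conjI ballI impI)
      show "\<eta> > 0" by (rule \<eta>)
      fix y assume yS: "y \<in> riemann_sphere" and dy: "dist y (Rf (c u0)) < \<eta>"
      have "dist (snd y) (snd y0) < 1 - snd y0"
        using dist_snd_le[of y y0] dy by (simp add: y0_def \<eta>_def)
      then have sy: "snd y \<noteq> 1" by (auto simp: dist_real_def)
      have "cmod (phi1 y - v0) < \<delta>" using \<eta>1(2)[of y] dy py0 by (simp add: y0_def \<eta>_def dist_norm)
      then obtain u where u: "cmod (u - u0) < \<epsilon>" "poly P u = phi1 y * poly Q u" using \<delta>(2) by blast
      have Qu: "poly Q u \<noteq> 0" using ncr[of u] u(2) by auto
      have "Rf (c u) = H (phi1 y * poly Q u) (poly Q u)" using RH u(2) by simp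
      also have "\<dots> = H (phi1 y) 1" using H_b[OF Qu] Qu by simp
      also have "\<dots> = y" by (rule c1_phi1[OF yS sy])
      finally show "y \<in> Rf ` U" using inU[OF u(1)] by (metis imageI)
    qed
  next
    case True
    have Pu0: "poly P u0 \<noteq> 0" using ncr[of u0] True by auto
    have pv0: "poly Q u0 = 0 * poly P u0" using True by simp
    obtain \<delta> where \<delta>: "\<delta> > 0"
      "\<And>v. cmod (v - 0) < \<delta> \<Longrightarrow> \<exists>u. cmod (u - u0) < \<epsilon> \<and> poly Q u = v * poly P u"
      using local_root[OF nc2 pv0 \<epsilon>(1)] by blast
    define y0 where "y0 = Rf (c u0)"
    have y0: "y0 = H 1 0" unfolding y0_def RH True using H_a[OF Pu0, of 0] by simp
    have s0: "snd y0 > -1" unfolding y0 by (rule snd_c2)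
    have py0: "phi2 y0 = 0" unfolding y0 by (simp add: H_def phi2_def)
    obtain \<eta>1 where \<eta>1: "\<eta>1 > 0" "\<And>y. dist y y0 < \<eta>1 \<Longrightarrow> dist (phi2 y) (phi2 y0) < \<delta>"
      using isCont_eps[OF phi2_isCont \<delta>(1), of y0] s0 by auto
    define \<eta> where "\<eta> = min \<eta>1 (snd y0 + 1)"
    have \<eta>: "\<eta> > 0" using \<eta>1 s0 by (simp add: \<eta>_def)
    show ?thesis
    proof (intro exI[of _ \<eta>] conjI ballI impI)
      show "\<eta> > 0" by (rule \<eta>)
      fix y assume yS: "y \<in> riemann_sphere" and dy: "dist y (Rf (c u0)) < \<eta>"
      have "dist (snd y) (snd y0) < snd y0 + 1"
        using dist_snd_le[of y y0] dy by (simp add: y0_def \<eta>_def)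
      then have sy: "snd y \<noteq> -1" by (auto simp: dist_real_def)
      have "cmod (phi2 y - 0) < \<delta>" using \<eta>1(2)[of y] dy py0 by (simp add: y0_def \<eta>_def dist_norm)
      then obtain u where u: "cmod (u - u0) < \<epsilon>" "poly Q u = phi2 y * poly P u" using \<delta>(2) by blast
      have Pu: "poly P u \<noteq> 0" using ncr[of u] u(2) by auto
      have "Rf (c u) = H (poly P u) (phi2 y * poly P u)" using RH u(2) by simp
      also have "\<dots> = H 1 (phi2 y)" using H_a[OF Pu] Pu by simp
      also have "\<dots> = y" by (rule c2_phi2[OF yS sy])
      finally show "y \<in> Rf ` U" using inU[OF u(1)] by (metis imageI)
    qed
  qed
qed

lemma phi2_c2: "phi2 (H 1 t) = t"
proof -
  have pos: "1 + (cmod t)\<^sup>2 > 0" by (simp add: add_pos_nonneg)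
  have "1 + (1 - (cmod t)\<^sup>2) / (1 + (cmod t)\<^sup>2) = 2 / (1 + (cmod t)\<^sup>2)"
    using pos by (simp add: field_simps)
  then show ?thesis unfolding phi2_def H_def using pos
    by (simp add: field_simps del: of_real_add of_real_power)
qed

lemma c1_cont: "continuous_on UNIV (\<lambda>w. H w 1)"
  by (rule H_cont) (auto intro: continuous_intros)

lemma c2_cont: "continuous_on UNIV (\<lambda>t. H 1 t)"
  by (rule H_cont) (auto intro: continuous_intros)

lemma fst_N: "x \<in> riemann_sphere \<Longrightarrow> snd x = 1 \<Longrightarrow> x = H 1 0"
  using sphere_eq[of x] by (cases x) (simp add: H_def)

context
  fixes p q :: "complex poly"
  assumes rat: "is_rational_fn p q" and deg: "rat_degree p q \<ge> 2"
begin

lemma nc1: "p - smult v q \<noteq> 0"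
proof
  assume "p - smult v q = 0"
  then have pq: "p = smult v q" by simp
  have cop: "coprime p q" using rat by (simp add: is_rational_fn_def)
  have "q dvd p" unfolding pq by (simp add: dvd_smult)
  then have "is_unit q" using coprime_common_divisor[OF cop, of q] by simp
  then have "degree q = 0" by (simp add: is_unit_iff_degree q_nz[OF rat deg])
  moreover have "degree p \<le> degree q" unfolding pq by (rule degree_smult_le)
  ultimately show False using deg by (simp add: rat_degree_def)
qed

lemma nc1': "q - smult v p \<noteq> 0"
proof
  assume "q - smult v p = 0"
  then have pq: "q = smult v p" by simp
  have cop: "coprime p q" using rat by (simp add: is_rational_fn_def)
  have "p dvd q" unfolding pq by (simp add: dvd_smult)
  then have u: "is_unit p" using coprime_common_divisor[OF cop, of p] by simp
  then have "p \<noteq> 0" by auto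
  then have "degree p = 0" using u by (simp add: is_unit_iff_degree)
  moreover have "degree q \<le> degree p" unfolding pq by (rule degree_smult_le)
  ultimately show False using deg by (simp add: rat_degree_def)
qed

lemma infinite_roots_zero:
  fixes f :: "complex poly"
  assumes "\<And>w. w \<noteq> 0 \<Longrightarrow> poly f w = 0"
  shows "f = 0"
proof (rule ccontr)
  assume "f \<noteq> 0"
  then have "finite {w. poly f w = 0}" by (rule poly_roots_finite)
  then have "finite (insert 0 {w. poly f w = 0})" by simp
  moreover have "(UNIV :: complex set) \<subseteq> insert 0 {w. poly f w = 0}" using assms by auto
  ultimately have "finite (UNIV :: complex set)" by (rule finite_subset[rotated])
  then show False by (simp add: infinite_UNIV_char_0)
qed

lemma nc2: "P2 p q - smult v (Q2 p q) \<noteq> 0"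
proof
  assume "P2 p q - smult v (Q2 p q) = 0"
  then have e: "poly (P2 p q) t = v * poly (Q2 p q) t" for t
    by (metis add.inverse_neutral diff_0 eq_iff_diff_eq_0 poly_smult)
  have "poly (p - smult v q) w = 0" if "w \<noteq> 0" for w
  proof -
    have t: "inverse w \<noteq> 0" using that by simp
    have "inverse w ^ dd p q * poly p w = v * (inverse w ^ dd p q * poly q w)"
      using e[of "inverse w"] P2_nz[OF rat deg t] Q2_nz[OF rat deg t] that by simp
    then have "poly p w = v * poly q w" using t by (simp add: algebra_simps)
    then show ?thesis by simp
  qed
  then have "p - smult v q = 0" by (rule infinite_roots_zero)
  then show False using nc1 by blast
qed

lemma nc2': "Q2 p q - smult v (P2 p q) \<noteq> 0"
proof
  assume "Q2 p q - smult v (P2 p q) = 0"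
  then have e: "poly (Q2 p q) t = v * poly (P2 p q) t" for t
    by (metis add.inverse_neutral diff_0 eq_iff_diff_eq_0 poly_smult)
  have "poly (q - smult v p) w = 0" if "w \<noteq> 0" for w
  proof -
    have t: "inverse w \<noteq> 0" using that by simp
    have "inverse w ^ dd p q * poly q w = v * (inverse w ^ dd p q * poly p w)"
      using e[of "inverse w"] P2_nz[OF rat deg t] Q2_nz[OF rat deg t] that by simp
    then have "poly q w = v * poly p w" using t by (simp add: algebra_simps)
    then show ?thesis by simp
  qed
  then have "q - smult v p = 0" by (rule infinite_roots_zero)
  then show False using nc1' by blast
qed

lemma R_c1: "rat_sph p q (H w 1) = H (poly p w) (poly q w)"
  using rat_sph_G1[OF rat deg, of "H w 1"] snd_c1[of w] by (simp add: phi1_c1)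

lemma R_c2: "rat_sph p q (H 1 t) = H (poly (P2 p q) t) (poly (Q2 p q) t)"
proof -
  have "H 1 t \<in> riemann_sphere" by (rule H_sphere) simp
  moreover have "snd (H 1 t) \<noteq> -1" using snd_c2[of t] by simp
  ultimately show ?thesis using rat_sph_G2[OF rat deg] by (simp add: phi2_c2)
qed

lemma R_open:
  assumes U: "openin (top_of_set riemann_sphere) U"
  shows "openin (top_of_set riemann_sphere) (rat_sph p q ` U)"
  unfolding openin_euclidean_subtopology_iff
proof (intro conjI ballI)
  show "rat_sph p q ` U \<subseteq> riemann_sphere" using R_S[OF rat deg] by auto
  fix y assume "y \<in> rat_sph p q ` U"
  then obtain x where x: "x \<in> U" "y = rat_sph p q x" by auto
  have xS: "x \<in> riemann_sphere" using x U by (meson in_mono openin_imp_subset)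
  show "\<exists>e>0. \<forall>x'\<in>riemann_sphere. dist x' y < e \<longrightarrow> x' \<in> rat_sph p q ` U"
  proof (cases "snd x = 1")
    case False
    have cx: "H (phi1 x) 1 = x" by (rule c1_phi1[OF xS False])
    have "H (phi1 x) 1 \<in> U" using cx x by simp
    from chart_open[OF c1_cont _ R_c1 no_common_root[OF rat deg] nc1 nc1' U this]
    show ?thesis using cx x H_sphere[of _ 1] by simp
  next
    case True
    then have s: "snd x \<noteq> -1" by simp
    have cx: "H 1 (phi2 x) = x" by (rule c2_phi2[OF xS s])
    have "H 1 (phi2 x) \<in> U" using cx x by simp
    from chart_open[OF c2_cont _ R_c2 no_common_root2[OF rat deg] nc2 nc2' U this]
    show ?thesis using cx x H_sphere[of 1] by simp
  qed
qed

lemma R_fin: "finite {x\<in>riemann_sphere. rat_sph p q x = y}"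
proof -
  have fw: "finite {w. H (poly p w) (poly q w) = y}"
  proof (cases "y = H 1 0")
    case True
    have "{w. H (poly p w) (poly q w) = y} \<subseteq> {w. poly q w = 0}"
    proof
      fix w assume w: "w \<in> {w. H (poly p w) (poly q w) = y}"
      show "w \<in> {w. poly q w = 0}"
      proof (rule ccontr)
        assume "w \<notin> {w. poly q w = 0}"
        then have qw: "poly q w \<noteq> 0" by simp
        have "snd (H (poly p w / poly q w) 1) < 1" by (rule snd_c1)
        moreover have "H (poly p w / poly q w) 1 = H 1 0" using w True H_b[OF qw] by simp
        ultimately show False by (simp add: H_def)
      qed
    qed
    moreover have "finite {w. poly q w = 0}" by (rule poly_roots_finite[OF q_nz[OF rat deg]])
    ultimately show ?thesis by (rule finite_subset)
  next
    case False
    have "{w. H (poly p w) (poly q w) = y} \<subseteq> {w. poly (p - smult (phi1 y) q) w = 0}"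
    proof
      fix w assume w: "w \<in> {w. H (poly p w) (poly q w) = y}"
      have qw: "poly q w \<noteq> 0"
      proof
        assume q0: "poly q w = 0"
        then have pw: "poly p w \<noteq> 0" using no_common_root[OF rat deg] by blast
        have "H (poly p w) 0 = H 1 0" by (subst H_a0[OF pw]) (rule N_H)
        then have "H (poly p w) (poly q w) = H 1 0" using q0 by simp
        then show False using w False by simp
      qed
      have "y = H (poly p w / poly q w) 1" using w H_b[OF qw] by simp
      then have "phi1 y = poly p w / poly q w" by (simp add: phi1_c1)
      then show "w \<in> {w. poly (p - smult (phi1 y) q) w = 0}" using qw by simp
    qed
    moreover have "finite {w. poly (p - smult (phi1 y) q) w = 0}" by (rule poly_roots_finite[OF nc1])
    ultimately show ?thesis by (rule finite_subset)
  qed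
  have "{x\<in>riemann_sphere. rat_sph p q x = y} \<subseteq>
          insert (H 1 0) ((\<lambda>w. H w 1) ` {w. H (poly p w) (poly q w) = y})"
  proof
    fix x assume x: "x \<in> {x\<in>riemann_sphere. rat_sph p q x = y}"
    show "x \<in> insert (H 1 0) ((\<lambda>w. H w 1) ` {w. H (poly p w) (poly q w) = y})"
    proof (cases "snd x = 1")
      case True then show ?thesis using fst_N x by auto
    next
      case False
      have cx: "H (phi1 x) 1 = x" using c1_phi1 x False by auto
      have "H (poly p (phi1 x)) (poly q (phi1 x)) = y" using x R_c1[of "phi1 x"] cx by simp
      then show ?thesis using cx by (metis (mono_tags, lifting) image_eqI insertCI mem_Collect_eq)
    qed
  qed
  moreover have "finite (insert (H 1 0) ((\<lambda>w. H w 1) ` {w. H (poly p w) (poly q w) = y}))"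
    using fw by simp
  ultimately show ?thesis by (rule finite_subset)
qed

end

theorem mainTheorem2:
  fixes p q :: "complex poly" and A :: "(complex \<times> real) set"
  assumes "is_rational_fn p q"
    and "rat_degree p q \<ge> 2"
    and "connected (julia_set p q)"
    and "A \<subseteq> julia_set p q" and "A \<noteq> {}"
    and "T_closed (julia_set p q) A"
  shows "T_closed (julia_set p q) {x \<in> riemann_sphere. rat_sph p q x \<in> A}"
proof (rule abstract_T_closed_preimage)
  let ?R = "rat_sph p q"
  note rat = assms(1) and deg = assms(2)
  show "compact riemann_sphere" by (simp add: riemann_sphere_def)
  show cont: "continuous_on riemann_sphere ?R" by (rule R_cont[OF rat deg])
  show RS: "?R ` riemann_sphere \<subseteq> riemann_sphere" using R_S[OF rat deg] by auto
  show op: "\<And>U. openin (top_of_set riemann_sphere) U \<Longrightarrow> openin (top_of_set riemann_sphere) (?R ` U)"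
    by (rule R_open[OF rat deg])
  show "\<And>y. finite {x \<in> riemann_sphere. ?R x = y}" by (rule R_fin[OF rat deg])
  show "julia_set p q \<subseteq> riemann_sphere" by (auto simp: julia_set_def)
  show "x \<in> julia_set p q \<longleftrightarrow> ?R x \<in> julia_set p q" if xS: "x \<in> riemann_sphere" for x
  proof -
    have i: "x \<in> fatR ?R \<longleftrightarrow> ?R x \<in> fatR ?R" by (rule fatR_inv[OF cont RS op xS])
    have j: "julia_set p q = riemann_sphere - fatR ?R" by (simp only: julia_set_def fatou_set_fatR)
    have "?R x \<in> riemann_sphere" by (rule R_S[OF rat deg])
    then show ?thesis unfolding j using i xS by blast
  qed
  show "A \<subseteq> julia_set p q" by (rule assms(4))
  show "T_closed (julia_set p q) A" by (rule assms(6))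
qed

end
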